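(* Let $\alpha=(A_0\leftarrow\cdots\leftarrow A_m)$ and $\beta=(B_0\leftarrow\cdots\leftarrow B_n)$ be universal evolutions for vertices $A_m$ and $B_n$, respectively, of a monotonous quiver, and suppose $A_m\le B_n$. If $m=n\ge1$, then $A_{m-1}\sim B_{n-1}$. If $m<n$, then $A_m\le B_{n-1}$.
   Context: A quiver consists of a class of vertices and, for each ordered pair of vertices $(A,B)$, a set of edges $A\to B$ (loops and multiple edges allowed). An evolution of length $m\ge 0$ is a sequence $A_0\leftarrow A_1\leftarrow\cdots\leftarrow A_m$ of vertices together with edges $A_k\to A_{k-1}$ ($1\le k\le m$); $A_0$ is its initial and $A_m$ its terminal vertex. Write $A\le B$ ($A$ is an ancestor of $B$) if there is an evolution with initial vertex $A$ and terminal vertex $B$; $A,B$ are isotypic ($A\sim B$) if $A\le B$ and $B\le A$. A vertex $A$ is primitive if every ancestor of $A$ is isotypic to $A$. A full evolution for $X$ is an evolution with primitive initial vertex and terminal vertex $X$. The height $h(X)$ is the smallest length of a full evolution for $X$ ($\infty$ if none). An evolution $\alpha=(A_0\leftarrow\cdots\leftarrow A_m)$ embeds in $\beta=(B_0\leftarrow\cdots\leftarrow B_n)$ if $m\le n$ and there are $0\le r_0<\cdots<r_m\le n$ with $A_k\sim B_{r_k}$. A universal evolution for $X$ is a full evolution for $X$ embedding in every full evolution for $X$. A quiver is monotonous if $h(A)\ge h(B)$ for every edge $A\to B$. *)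

theory Defs
  imports Main "HOL-Library.Extended_Nat"
begin

(* A quiver on vertex type 'v is represented by the predicate E, where
   E A B means: there is (at least one) edge A \<rightarrow> B. *)

definition is_evol :: "('v \<Rightarrow> 'v \<Rightarrow> bool) \<Rightarrow> 'v list \<Rightarrow> bool" where
  "is_evol E xs \<longleftrightarrow> xs \<noteq> [] \<and> (\<forall>k. 1 \<le> k \<and> k < length xs \<longrightarrow> E (xs ! k) (xs ! (k - 1)))"

definition evol_len :: "'v list \<Rightarrow> nat" where
  "evol_len xs = length xs - 1"

definition ancestor :: "('v \<Rightarrow> 'v \<Rightarrow> bool) \<Rightarrow> 'v \<Rightarrow> 'v \<Rightarrow> bool" where
  "ancestor E A B \<longleftrightarrow> (\<exists>xs. is_evol E xs \<and> hd xs = A \<and> last xs = B)"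

definition isotypic :: "('v \<Rightarrow> 'v \<Rightarrow> bool) \<Rightarrow> 'v \<Rightarrow> 'v \<Rightarrow> bool" where
  "isotypic E A B \<longleftrightarrow> ancestor E A B \<and> ancestor E B A"

definition primitive :: "('v \<Rightarrow> 'v \<Rightarrow> bool) \<Rightarrow> 'v \<Rightarrow> bool" where
  "primitive E A \<longleftrightarrow> (\<forall>B. ancestor E B A \<longrightarrow> isotypic E B A)"

definition full_evol :: "('v \<Rightarrow> 'v \<Rightarrow> bool) \<Rightarrow> 'v \<Rightarrow> 'v list \<Rightarrow> bool" where
  "full_evol E X xs \<longleftrightarrow> is_evol E xs \<and> primitive E (hd xs) \<and> last xs = X"

definition height :: "('v \<Rightarrow> 'v \<Rightarrow> bool) \<Rightarrow> 'v \<Rightarrow> enat" where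
  "height E X = (INF xs \<in> {xs. full_evol E X xs}. enat (evol_len xs))"

definition embeds :: "('v \<Rightarrow> 'v \<Rightarrow> bool) \<Rightarrow> 'v list \<Rightarrow> 'v list \<Rightarrow> bool" where
  "embeds E xs ys \<longleftrightarrow> evol_len xs \<le> evol_len ys \<and>
     (\<exists>r :: nat \<Rightarrow> nat. (\<forall>k < length xs. r k < length ys \<and> isotypic E (xs ! k) (ys ! (r k))) \<and>
        (\<forall>i j. i < j \<and> j < length xs \<longrightarrow> r i < r j))"

definition universal_evol :: "('v \<Rightarrow> 'v \<Rightarrow> bool) \<Rightarrow> 'v \<Rightarrow> 'v list \<Rightarrow> bool" where
  "universal_evol E X xs \<longleftrightarrow> full_evol E X xs \<and> (\<forall>ys. full_evol E X ys \<longrightarrow> embeds E xs ys)"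

definition monotonous :: "('v \<Rightarrow> 'v \<Rightarrow> bool) \<Rightarrow> bool" where
  "monotonous E \<longleftrightarrow> (\<forall>A B. E A B \<longrightarrow> height E A \<ge> height E B)"

end

theory Submission
  imports Defs
begin

lemma evol_take:
  assumes "is_evol E xs" "i < length xs"
  shows "is_evol E (take (Suc i) xs) \<and> hd (take (Suc i) xs) = hd xs \<and> last (take (Suc i) xs) = xs ! i"
proof -
  have ne: "xs \<noteq> []" using assms(1) by (simp add: is_evol_def)
  have "is_evol E (take (Suc i) xs)" using assms unfolding is_evol_def by auto
  moreover have "hd (take (Suc i) xs) = hd xs" using ne by (cases xs) auto
  moreover have "last (take (Suc i) xs) = xs ! i"
    using assms(2) by (subst last_conv_nth) auto
  ultimately show ?thesis by blast
qed

lemma anc_nth: "is_evol E xs \<Longrightarrow> i < length xs \<Longrightarrow> ancestor E (hd xs) (xs ! i)"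
  unfolding ancestor_def using evol_take by blast

lemma concat_nth:
  assumes "xs \<noteq> []" "ys \<noteq> []" "last xs = hd ys" "length xs - 1 \<le> j" "j < length xs + length ys - 1"
  shows "(xs @ tl ys) ! j = ys ! (j - (length xs - 1))"
proof (cases "j < length xs")
  case True
  then have "j = length xs - 1" using assms(4) by simp
  then show ?thesis using assms True by (simp add: nth_append last_conv_nth hd_conv_nth)
next
  case False
  have "j - (length xs - 1) = Suc (j - length xs)" using False assms(1) by (cases xs) auto
  then show ?thesis using assms False by (simp add: nth_append nth_tl)
qed

lemma concat_evol:
  assumes "is_evol E xs" "is_evol E ys" "last xs = hd ys"
  shows "is_evol E (xs @ tl ys) \<and> hd (xs @ tl ys) = hd xs \<and> last (xs @ tl ys) = last ys"
proof -
  have nx: "xs \<noteq> []" and ny: "ys \<noteq> []" using assms by (auto simp: is_evol_def)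
  have L: "length (xs @ tl ys) = length xs + length ys - 1" using ny by (cases ys) auto
  have "E ((xs @ tl ys) ! k) ((xs @ tl ys) ! (k - 1))" if k: "1 \<le> k" "k < length (xs @ tl ys)" for k
  proof (cases "k < length xs")
    case True
    have "k - 1 < length xs" using True by simp
    then show ?thesis using assms(1) k True by (simp add: nth_append is_evol_def)
  next
    case False
    have a: "(xs @ tl ys) ! k = ys ! (k - (length xs - 1))"
      using concat_nth[OF nx ny assms(3)] False k L by simp
    have b: "(xs @ tl ys) ! (k-1) = ys ! (k - 1 - (length xs - 1))"
      using concat_nth[OF nx ny assms(3)] False k L by simp
    have c: "k - 1 - (length xs - 1) = k - (length xs - 1) - 1" by simp
    have "1 \<le> k - (length xs - 1)" "k - (length xs - 1) < length ys" using False k L nx by auto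
    then show ?thesis using assms(2) a b c unfolding is_evol_def by metis
  qed
  then have "is_evol E (xs @ tl ys)" using nx unfolding is_evol_def by auto
  moreover have "hd (xs @ tl ys) = hd xs" using nx by simp
  moreover have "last (xs @ tl ys) = last ys"
    using assms(3) nx ny by (cases "tl ys = []") (auto simp: last_tl, metis hd_Cons_tl last_ConsL)
  ultimately show ?thesis by blast
qed

lemma anc_trans: "ancestor E A B \<Longrightarrow> ancestor E B C \<Longrightarrow> ancestor E A C"
  unfolding ancestor_def using concat_evol by metis

lemma height_le: "full_evol E X xs \<Longrightarrow> height E X \<le> enat (evol_len xs)"
  unfolding height_def by (rule INF_lower) simp

lemma height_univ: "universal_evol E X xs \<Longrightarrow> height E X = enat (evol_len xs)"
proof -
  assume u: "universal_evol E X xs"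
  have "enat (evol_len xs) \<le> height E X"
    unfolding height_def
  proof (rule INF_greatest)
    fix ys assume "ys \<in> {ys. full_evol E X ys}"
    then show "enat (evol_len xs) \<le> enat (evol_len ys)" using u
      by (auto simp: universal_evol_def embeds_def)
  qed
  moreover have "height E X \<le> enat (evol_len xs)" using u height_le universal_evol_def by metis
  ultimately show ?thesis by simp
qed

lemma height_mono_evol:
  assumes "monotonous E" "is_evol E xs"
  shows "i < length xs \<Longrightarrow> height E (hd xs) \<le> height E (xs ! i)"
proof (induction i)
  case 0
  then show ?case using assms(2) by (simp add: hd_conv_nth is_evol_def)
next
  case (Suc i)
  then have "E (xs ! Suc i) (xs ! i)" using assms(2) unfolding is_evol_def
    by (metis diff_Suc_1 le_add1 plus_1_eq_Suc)
  then have "height E (xs ! i) \<le> height E (xs ! Suc i)" using assms(1) by (simp add: monotonous_def)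
  then show ?case using Suc by auto
qed

lemma height_mono: "monotonous E \<Longrightarrow> ancestor E A B \<Longrightarrow> height E A \<le> height E B"
  unfolding ancestor_def using height_mono_evol
  by (metis last_conv_nth is_evol_def diff_less length_greater_0_conv zero_less_one)

lemma iso_height: "monotonous E \<Longrightarrow> isotypic E A B \<Longrightarrow> height E A = height E B"
  unfolding isotypic_def using height_mono order_antisym by metis

lemma strict_ge: "(\<forall>i j. i < j \<and> j < L \<longrightarrow> r i < (r j::nat)) \<Longrightarrow> k < L \<Longrightarrow> k \<le> r k"
proof (induction k)
  case 0 then show ?case by simp
next
  case (Suc k)
  have "r k < r (Suc k)" using Suc.prems by auto
  moreover have "k \<le> r k" using Suc by simp
  ultimately show ?case by simp
qed

theorem lemma7p2:
  fixes E :: "'v \<Rightarrow> 'v \<Rightarrow> bool" and As Bs :: "'v list" and m n :: nat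
  assumes "monotonous E"
    and "universal_evol E (last As) As"
    and "universal_evol E (last Bs) Bs"
    and "evol_len As = m" and "evol_len Bs = n"
    and "ancestor E (last As) (last Bs)"
  shows "(m = n \<and> m \<ge> 1 \<longrightarrow> isotypic E (As ! (m - 1)) (Bs ! (n - 1)))
       \<and> (m < n \<longrightarrow> ancestor E (last As) (Bs ! (n - 1)))"
proof -
  have fA: "full_evol E (last As) As" and fB: "full_evol E (last Bs) Bs"
    using assms(2,3) by (auto simp: universal_evol_def)
  have eA: "is_evol E As" and eB: "is_evol E Bs" using fA fB by (auto simp: full_evol_def)
  have nA: "As \<noteq> []" and nB: "Bs \<noteq> []" using eA eB by (auto simp: is_evol_def)
  have lA: "length As = Suc m" and lB: "length Bs = Suc n"
    using assms(4,5) nA nB by (auto simp: evol_len_def)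
  obtain ps where ps: "is_evol E ps" "hd ps = last As" "last ps = last Bs"
    using assms(6) unfolding ancestor_def by blast
  have nps: "ps \<noteq> []" using ps by (auto simp: is_evol_def)
  define g where "g = As @ tl ps"
  have ge: "is_evol E g" "hd g = hd As" "last g = last Bs"
    using concat_evol[OF eA ps(1)] ps by (auto simp: g_def)
  have fg: "full_evol E (last Bs) g" using ge fA by (simp add: full_evol_def)
  have Lg: "length g = length As + length ps - 1" using nps unfolding g_def by (cases ps) auto
  have tailanc: "ancestor E (last As) (g ! j)" if "m \<le> j" "j < length g" for j
  proof -
    have "g ! j = ps ! (j - m)" using concat_nth[OF nA nps ps(2)[symmetric]] that lA Lg
      unfolding g_def by simp
    moreover have "j - m < length ps" using that Lg lA by simp
    ultimately show ?thesis using anc_nth[OF ps(1)] ps(2) by metis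
  qed
  have gA: "g ! j = As ! j" if "j < length As" for j using that by (simp add: g_def nth_append)
  obtain r where r: "\<forall>k < length Bs. r k < length g \<and> isotypic E (Bs ! k) (g ! (r k))"
      "\<forall>i j. i < j \<and> j < length Bs \<longrightarrow> r i < r j"
    using assms(3) fg unfolding universal_evol_def embeds_def by blast
  show ?thesis
  proof (intro conjI impI)
    assume mn: "m = n \<and> 1 \<le> m"
    let ?k = "n - 1"
    have k: "?k < length Bs" using lB by simp
    have ge1: "?k \<le> r ?k" using strict_ge[OF r(2) k] .
    have iso: "isotypic E (Bs ! ?k) (g ! r ?k)" using r(1) k by blast
    have hB: "height E (Bs ! ?k) \<le> enat ?k"
    proof -
      have "full_evol E (Bs ! ?k) (take (Suc ?k) Bs)"
        using evol_take[OF eB k] fB by (simp add: full_evol_def)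
      moreover have "evol_len (take (Suc ?k) Bs) = ?k" using k by (simp add: evol_len_def)
      ultimately show ?thesis using height_le by metis
    qed
    have "r ?k < m"
    proof (rule ccontr)
      assume "\<not> r ?k < m"
      then have "ancestor E (last As) (g ! r ?k)" using tailanc r(1) k by simp
      then have "height E (last As) \<le> height E (g ! r ?k)" using height_mono assms(1) by metis
      moreover have "height E (last As) = enat m" using height_univ[OF assms(2)] assms(4) by simp
      moreover have "height E (g ! r ?k) = height E (Bs ! ?k)" using iso_height[OF assms(1) iso] by simp
      ultimately have "enat m \<le> enat ?k" using hB by (metis order_trans)
      then show False using mn by (simp, linarith)
    qed
    then have "r ?k = m - 1" using ge1 mn by linarith
    then have "g ! r ?k = As ! (m - 1)" using gA lA by simp
    then show "isotypic E (As ! (m - 1)) (Bs ! (n - 1))" using iso by (simp add: isotypic_def)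
  next
    assume mn: "m < n"
    let ?k = "n - 1"
    have k: "?k < length Bs" using lB by simp
    have ge1: "?k \<le> r ?k" using strict_ge[OF r(2) k] .
    have iso: "isotypic E (Bs ! ?k) (g ! r ?k)" using r(1) k by blast
    have "ancestor E (last As) (g ! r ?k)" using tailanc r(1) k ge1 mn by simp
    then show "ancestor E (last As) (Bs ! (n - 1))" using iso anc_trans isotypic_def by metis
  qed
qed

end
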